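(* Let $k\ge 2$, let $H_0$ be a finite $k$-uniform hypergraph, let $(H_t)_{t\ge0}$ be the ILTH hypergraphs generated from $H_0$, and for each $t$ let $G(H_t)$ denote the 2-section of $H_t$. A finite graph $G$ admits a homomorphism to $G(H_0)$ if and only if $G$ is isomorphic to an induced subgraph of $G(H_t)$ for some integer $t\ge 0$. In particular, the set of isomorphism types of finite induced subgraphs of the graphs $G(H_t)$, $t\ge0$, is exactly the set of finite graphs admitting a homomorphism to $G(H_0)$.
   Context: A $k$-uniform hypergraph has every hyperedge a $k$-element subset of the vertex set. The ILTH process: given $H_t$, form $H_{t+1}$ by adding for each vertex $x\in V(H_t)$ a new vertex $x'$ (its clone), and taking $E(H_{t+1})=E(H_t)\cup\{(e\setminus\{x\})\cup\{x'\} : e\in E(H_t),\ x\in e\}$. The 2-section of a hypergraph is the graph on the same vertices in which distinct vertices are adjacent iff they lie in a common hyperedge. A homomorphism of graphs is a map on vertices sending edges to edges. *)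

theory Defs
  imports Main
begin

definition uniform_hypergraph :: "nat \<Rightarrow> 'v set \<Rightarrow> 'v set set \<Rightarrow> bool" where
  "uniform_hypergraph k V E \<longleftrightarrow> (\<forall>e\<in>E. e \<subseteq> V \<and> finite e \<and> card e = k)"

text \<open>Vertices of the ILTH hypergraphs are pairs (a, p) with a an original vertex of H_0
  and p a list recording the clone steps; the clone of (a,p) created at step t is (a, p @ [t]).
  At step t all vertices have list entries < t, so clones are fresh.\<close>

definition clone :: "nat \<Rightarrow> 'a \<times> nat list \<Rightarrow> 'a \<times> nat list" where
  "clone t x = (fst x, snd x @ [t])"

definition ilth_step :: "nat \<Rightarrow> ('a \<times> nat list) set \<times> ('a \<times> nat list) set set
    \<Rightarrow> ('a \<times> nat list) set \<times> ('a \<times> nat list) set set" where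
  "ilth_step t H = (fst H \<union> clone t ` fst H,
     snd H \<union> {insert (clone t x) (e - {x}) | e x. e \<in> snd H \<and> x \<in> e})"

fun ilth :: "'a set \<Rightarrow> 'a set set \<Rightarrow> nat \<Rightarrow> ('a \<times> nat list) set \<times> ('a \<times> nat list) set set" where
  "ilth V0 E0 0 = ((\<lambda>a. (a, [])) ` V0, (\<lambda>e. (\<lambda>a. (a, [])) ` e) ` E0)"
| "ilth V0 E0 (Suc t) = ilth_step t (ilth V0 E0 t)"

definition graph :: "'v set \<Rightarrow> 'v set set \<Rightarrow> bool" where
  "graph V E \<longleftrightarrow> (\<forall>e\<in>E. \<exists>u v. e = {u, v} \<and> u \<noteq> v \<and> u \<in> V \<and> v \<in> V)"

definition two_section :: "'v set \<Rightarrow> 'v set set \<Rightarrow> 'v set set" where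
  "two_section V E = {{u, v} | u v. u \<noteq> v \<and> (\<exists>e\<in>E. u \<in> e \<and> v \<in> e)}"

definition graph_hom :: "'a set \<Rightarrow> 'a set set \<Rightarrow> 'b set \<Rightarrow> 'b set set \<Rightarrow> ('a \<Rightarrow> 'b) \<Rightarrow> bool" where
  "graph_hom V E W F f \<longleftrightarrow> f ` V \<subseteq> W \<and> (\<forall>u\<in>V. \<forall>v\<in>V. {u, v} \<in> E \<longrightarrow> {f u, f v} \<in> F)"

definition iso_induced_subgraph :: "'a set \<Rightarrow> 'a set set \<Rightarrow> 'b set \<Rightarrow> 'b set set \<Rightarrow> bool" where
  "iso_induced_subgraph V E W F \<longleftrightarrow>
     (\<exists>f S. S \<subseteq> W \<and> bij_betw f V S \<and>
        (\<forall>u\<in>V. \<forall>v\<in>V. {u, v} \<in> E \<longleftrightarrow> {f u, f v} \<in> F))"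

end

theory Submission
  imports Defs
begin

lemma ilth_fst_iff:
  "(a, p) \<in> fst (ilth V0 E0 t) \<longleftrightarrow> a \<in> V0 \<and> sorted_wrt (<) p \<and> (\<forall>i\<in>set p. i < t)"
proof (induction t arbitrary: a p)
  case 0
  then show ?case by auto
next
  case (Suc t)
  show ?case
  proof
    assume "(a, p) \<in> fst (ilth V0 E0 (Suc t))"
    then have "(a, p) \<in> fst (ilth V0 E0 t) \<or> (\<exists>q. p = q @ [t] \<and> (a, q) \<in> fst (ilth V0 E0 t))"
      by (auto simp: ilth_step_def clone_def)
    then show "a \<in> V0 \<and> sorted_wrt (<) p \<and> (\<forall>i\<in>set p. i < Suc t)"
    proof
      assume "(a, p) \<in> fst (ilth V0 E0 t)"
      then show ?thesis using Suc by auto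
    next
      assume "\<exists>q. p = q @ [t] \<and> (a, q) \<in> fst (ilth V0 E0 t)"
      then obtain q where "p = q @ [t]" "(a, q) \<in> fst (ilth V0 E0 t)" by blast
      then show ?thesis using Suc[of a q] by (auto simp: sorted_wrt_append)
    qed
  next
    assume A: "a \<in> V0 \<and> sorted_wrt (<) p \<and> (\<forall>i\<in>set p. i < Suc t)"
    show "(a, p) \<in> fst (ilth V0 E0 (Suc t))"
    proof (cases p rule: rev_cases)
      case Nil
      then show ?thesis using A Suc[of a p] by (auto simp: ilth_step_def)
    next
      case (snoc q x)
      then have q: "sorted_wrt (<) q" "\<forall>i\<in>set q. i < x" "x < Suc t"
        using A by (auto simp: sorted_wrt_append)
      show ?thesis
      proof (cases "x = t")
        case True
        then have "(a, q) \<in> fst (ilth V0 E0 t)" using Suc[of a q] q A by auto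
        then have "clone t (a, q) \<in> fst (ilth V0 E0 (Suc t))"
          by (auto simp: ilth_step_def)
        then show ?thesis using snoc True by (simp add: clone_def)
      next
        case False
        then have "(a, p) \<in> fst (ilth V0 E0 t)" using Suc[of a p] q A snoc by auto
        then show ?thesis by (auto simp: ilth_step_def)
      qed
    qed
  qed
qed

lemma ilth_edge_inv:
  "e \<in> snd (ilth V0 E0 t) \<Longrightarrow> fst ` e \<in> E0 \<and> inj_on fst e \<and>
    (\<forall>x\<in>e. \<forall>y\<in>e. x \<noteq> y \<longrightarrow> set (snd x) \<inter> set (snd y) = {}) \<and>
    (\<forall>x\<in>e. \<forall>i\<in>set (snd x). i < t)"
proof (induction t arbitrary: e)
  case 0
  then obtain e0 where e0: "e0 \<in> E0" "e = (\<lambda>a. (a, [])) ` e0" by auto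
  have "fst ` e = e0" using e0 by (auto simp: image_image)
  then show ?case using e0 by (auto simp: inj_on_def)
next
  case (Suc t)
  from Suc.prems have "e \<in> snd (ilth V0 E0 t) \<or>
     (\<exists>e' x. e = insert (clone t x) (e' - {x}) \<and> e' \<in> snd (ilth V0 E0 t) \<and> x \<in> e')"
    by (auto simp: ilth_step_def)
  then show ?case
  proof
    assume "e \<in> snd (ilth V0 E0 t)"
    then show ?thesis using Suc.IH[of e] by fastforce
  next
    assume "\<exists>e' x. e = insert (clone t x) (e' - {x}) \<and> e' \<in> snd (ilth V0 E0 t) \<and> x \<in> e'"
    then obtain e' x where ex: "e = insert (clone t x) (e' - {x})" "e' \<in> snd (ilth V0 E0 t)" "x \<in> e'"
      by blast
    note IH = Suc.IH[OF ex(2)]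
    have f1: "fst ` e = fst ` e'" using ex by (auto simp: clone_def)
    have f2: "\<forall>y\<in>e' - {x}. fst y \<noteq> fst x" using IH ex(3) by (auto simp: inj_on_def)
    have f3: "inj_on fst e"
      unfolding ex(1) inj_on_def
    proof (intro ballI impI)
      fix y z assume y: "y \<in> insert (clone t x) (e' - {x})" and z: "z \<in> insert (clone t x) (e' - {x})"
        and yz: "fst y = fst z"
      have fc: "fst (clone t x) = fst x" by (simp add: clone_def)
      show "y = z"
        using y z yz f2 fc IH by (auto simp: inj_on_def)
    qed
    have f4: "\<forall>y\<in>e' - {x}. t \<notin> set (snd y)" using IH by auto
    have f5: "\<forall>y\<in>e' - {x}. set (snd y) \<inter> set (snd x) = {}" using IH ex(3) by blast
    have f6: "\<forall>y\<in>e. \<forall>z\<in>e. y \<noteq> z \<longrightarrow> set (snd y) \<inter> set (snd z) = {}"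
      unfolding ex(1) using IH f4 f5 by (auto simp: clone_def)
    have f7: "\<forall>y\<in>e. \<forall>i\<in>set (snd y). i < Suc t"
      unfolding ex(1) using IH ex(3) by (auto simp: clone_def) (metis less_SucI snd_conv)+
    show ?thesis using f1 f3 f6 f7 IH by simp
  qed
qed

lemma ilth_edge_complete:
  assumes "e0 \<in> E0"
  shows "(\<forall>a\<in>e0. sorted_wrt (<) (P a) \<and> (\<forall>i\<in>set (P a). i < t)) \<Longrightarrow>
    (\<forall>a\<in>e0. \<forall>b\<in>e0. a \<noteq> b \<longrightarrow> set (P a) \<inter> set (P b) = {}) \<Longrightarrow>
    (\<lambda>a. (a, P a)) ` e0 \<in> snd (ilth V0 E0 t)"
proof (induction t arbitrary: P)
  case 0
  then have "(\<lambda>a. (a, P a)) ` e0 = (\<lambda>a. (a, [])) ` e0" by (intro image_cong) auto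
  then show ?case using assms by simp
next
  case (Suc t)
  have sub: "snd (ilth V0 E0 t) \<subseteq> snd (ilth V0 E0 (Suc t))" by (auto simp: ilth_step_def)
  show ?case
  proof (cases "\<forall>a\<in>e0. \<forall>i\<in>set (P a). i < t")
    case True
    then show ?thesis using Suc.IH[of P] Suc.prems sub by blast
  next
    case False
    then obtain a i where ai: "a \<in> e0" "i \<in> set (P a)" "\<not> i < t" by blast
    then have "P a \<noteq> []" by auto
    then obtain q x where qx: "P a = q @ [x]" by (cases "P a" rule: rev_cases) auto
    have sq: "sorted_wrt (<) q" "\<forall>j\<in>set q. j < x" "x < Suc t"
      using Suc.prems(1) ai(1) qx by (auto simp: sorted_wrt_append)
    have "i \<le> x" using ai(2) qx sq(2) by fastforce
    then have xt: "x = t" using ai(3) sq(3) by simp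
    define P' where "P' = P(a := q)"
    have c1: "\<forall>b\<in>e0. sorted_wrt (<) (P' b) \<and> (\<forall>i\<in>set (P' b). i < t)"
    proof
      fix b assume b: "b \<in> e0"
      show "sorted_wrt (<) (P' b) \<and> (\<forall>i\<in>set (P' b). i < t)"
      proof (cases "b = a")
        case True then show ?thesis using sq xt by (simp add: P'_def)
      next
        case False
        then have "t \<notin> set (P b)" using Suc.prems(2) b ai(1) qx xt by auto
        then show ?thesis using Suc.prems(1) b False
          by (auto simp: P'_def) (metis less_SucE)
      qed
    qed
    have sPa: "set q \<subseteq> set (P a)" using qx by auto
    have sP': "\<And>b. set (P' b) \<subseteq> set (P b)" using sPa by (simp add: P'_def)
    have c2: "\<forall>b\<in>e0. \<forall>c\<in>e0. b \<noteq> c \<longrightarrow> set (P' b) \<inter> set (P' c) = {}"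
    proof (intro ballI impI)
      fix b c assume "b \<in> e0" "c \<in> e0" "b \<noteq> c"
      then have "set (P b) \<inter> set (P c) = {}" using Suc.prems(2) by blast
      then show "set (P' b) \<inter> set (P' c) = {}" using sP'[of b] sP'[of c] by blast
    qed
    define e' where "e' = (\<lambda>b. (b, P' b)) ` e0"
    have e'in: "e' \<in> snd (ilth V0 E0 t)" using Suc.IH[OF c1 c2] by (simp add: e'_def)
    have x0: "(a, q) \<in> e'" using ai(1) by (simp add: e'_def P'_def image_iff)
    have d: "e' - {(a, q)} = (\<lambda>b. (b, P b)) ` (e0 - {a})"
      unfolding e'_def P'_def by auto
    have "insert (clone t (a, q)) (e' - {(a, q)}) = insert (a, P a) ((\<lambda>b. (b, P b)) ` (e0 - {a}))"
      using d qx xt by (simp add: clone_def)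
    also have "\<dots> = (\<lambda>b. (b, P b)) ` e0" using ai(1) by blast
    finally have eq: "insert (clone t (a, q)) (e' - {(a, q)}) = (\<lambda>b. (b, P b)) ` e0" .
    have "insert (clone t (a, q)) (e' - {(a, q)}) \<in> snd (ilth V0 E0 (Suc t))"
      using e'in x0 by (auto simp: ilth_step_def)
    then show ?thesis using eq by simp
  qed
qed

lemma two_section_iff:
  "{x, y} \<in> two_section W F \<longleftrightarrow> x \<noteq> y \<and> (\<exists>e\<in>F. x \<in> e \<and> y \<in> e)"
  unfolding two_section_def by (auto simp: doubleton_eq_iff)

lemma ilth_adj:
  assumes "{x, y} \<in> two_section (fst (ilth V0 E0 t)) (snd (ilth V0 E0 t))"
  shows "{fst x, fst y} \<in> two_section V0 E0 \<and> set (snd x) \<inter> set (snd y) = {}"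
proof -
  from assms obtain e where e: "x \<noteq> y" "e \<in> snd (ilth V0 E0 t)" "x \<in> e" "y \<in> e"
    by (auto simp: two_section_iff)
  note I = ilth_edge_inv[OF e(2)]
  have "fst x \<noteq> fst y" using I e by (auto simp: inj_on_def)
  moreover have "fst x \<in> fst ` e" "fst y \<in> fst ` e" using e by auto
  ultimately show ?thesis using I e by (auto simp: two_section_iff)
qed

lemma graph_edge_neq: "graph V E \<Longrightarrow> {u, v} \<in> E \<Longrightarrow> u \<noteq> v"
  unfolding graph_def by (metis doubleton_eq_iff insert_absorb2)

theorem theorem3p1:
  fixes k :: nat and V0 :: "'a set" and E0 :: "'a set set"
    and V :: "'b set" and E :: "'b set set"
  assumes "k \<ge> 2"
    and "finite V0"
    and "uniform_hypergraph k V0 E0"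
    and "finite V" and "graph V E"
  shows "(\<exists>f. graph_hom V E V0 (two_section V0 E0) f) \<longleftrightarrow>
         (\<exists>t. iso_induced_subgraph V E (fst (ilth V0 E0 t))
                 (two_section (fst (ilth V0 E0 t)) (snd (ilth V0 E0 t))))"
proof
  assume "\<exists>t. iso_induced_subgraph V E (fst (ilth V0 E0 t))
                 (two_section (fst (ilth V0 E0 t)) (snd (ilth V0 E0 t)))"
  then obtain t g S where g: "S \<subseteq> fst (ilth V0 E0 t)" "bij_betw g V S"
    "\<forall>u\<in>V. \<forall>v\<in>V. {u, v} \<in> E \<longleftrightarrow> {g u, g v} \<in> two_section (fst (ilth V0 E0 t)) (snd (ilth V0 E0 t))"
    unfolding iso_induced_subgraph_def by blast
  have "graph_hom V E V0 (two_section V0 E0) (\<lambda>v. fst (g v))"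
    unfolding graph_hom_def
  proof (intro conjI ballI impI subsetI)
    fix y assume "y \<in> (\<lambda>v. fst (g v)) ` V"
    then obtain v where v: "v \<in> V" "y = fst (g v)" by blast
    then have "g v \<in> fst (ilth V0 E0 t)" using g(1,2) by (auto simp: bij_betw_def)
    then show "y \<in> V0" using v ilth_fst_iff[of "fst (g v)" "snd (g v)"] by simp
  next
    fix u v assume "u \<in> V" "v \<in> V" "{u, v} \<in> E"
    then show "{fst (g u), fst (g v)} \<in> two_section V0 E0" using g(3) ilth_adj by blast
  qed
  then show "\<exists>f. graph_hom V E V0 (two_section V0 E0) f" by blast
next
  assume "\<exists>f. graph_hom V E V0 (two_section V0 E0) f"
  then obtain f where f: "graph_hom V E V0 (two_section V0 E0) f" by blast
  define T where "T = {{u, v} | u v. u \<in> V \<and> v \<in> V \<and> (u = v \<or> {u, v} \<notin> E)}"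
  have "T \<subseteq> Pow V" unfolding T_def by auto
  then have "finite T" using assms(4) finite_subset by blast
  then obtain idx :: "'b set \<Rightarrow> nat" and n :: nat where idx: "idx ` T = {i. i < n}" "inj_on idx T"
    using finite_imp_inj_to_nat_seg by blast
  define P where "P v = {idx s | s. s \<in> T \<and> v \<in> s}" for v
  have Pfin: "finite (P v)" for v
  proof -
    have "P v \<subseteq> {i. i < n}" using idx(1) unfolding P_def by blast
    then show ?thesis using finite_subset by blast
  qed
  have Plt: "\<forall>i\<in>P v. i < n" for v using idx(1) unfolding P_def by blast
  have K1: "P u \<inter> P v = {}" if "u \<in> V" "v \<in> V" "{u, v} \<in> E" for u v
  proof (rule ccontr)
    assume "P u \<inter> P v \<noteq> {}"
    then obtain s1 s2 where s: "s1 \<in> T" "u \<in> s1" "s2 \<in> T" "v \<in> s2" "idx s1 = idx s2"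
      unfolding P_def by blast
    then have "s1 = s2" using idx(2) by (meson inj_onD)
    have uv: "u \<noteq> v" using graph_edge_neq[OF assms(5) that(3)] .
    from s(1) obtain x y where xy: "s1 = {x, y}" "x \<in> V" "y \<in> V" "x = y \<or> {x, y} \<notin> E"
      unfolding T_def by blast
    have "{x, y} = {u, v}" using xy(1) s(2,4) \<open>s1 = s2\<close> uv by auto
    then show False using xy(4) uv that(3) by (metis doubleton_eq_iff)
  qed
  have K2: "P u \<inter> P v \<noteq> {}" if "u \<in> V" "v \<in> V" "{u, v} \<notin> E" for u v
  proof -
    have "{u, v} \<in> T" using that unfolding T_def by blast
    then have "idx {u, v} \<in> P u \<inter> P v" unfolding P_def by blast
    then show ?thesis by blast
  qed
  have K3: "u = v" if "u \<in> V" "v \<in> V" "P u = P v" for u v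
  proof -
    have uT: "{u} \<in> T" unfolding T_def using that(1)
      by (intro CollectI exI[of _ u]) simp
    then have "idx {u} \<in> P u" unfolding P_def by blast
    then have "idx {u} \<in> P v" using that(3) by simp
    then obtain s where s: "s \<in> T" "v \<in> s" "idx {u} = idx s" unfolding P_def by blast
    have "{u} = s" using s uT idx(2) by (meson inj_onD)
    then show ?thesis using s(2) by blast
  qed
  define g where "g v = (f v, sorted_list_of_set (P v))" for v
  have setg: "set (snd (g v)) = P v" for v using Pfin by (simp add: g_def)
  let ?W = "fst (ilth V0 E0 n)" and ?F = "snd (ilth V0 E0 n)"
  have ginj: "inj_on g V"
    unfolding inj_on_def
  proof (intro ballI impI)
    fix u v assume "u \<in> V" "v \<in> V" "g u = g v"
    then have "P u = P v" using setg by metis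
    then show "u = v" using K3 \<open>u \<in> V\<close> \<open>v \<in> V\<close> by blast
  qed
  have gW: "g ` V \<subseteq> ?W"
  proof
    fix y assume "y \<in> g ` V"
    then obtain v where v: "v \<in> V" "y = g v" by blast
    have "f v \<in> V0" using f v(1) unfolding graph_hom_def by blast
    then show "y \<in> ?W" using v Plt[of v] Pfin[of v]
      by (simp add: ilth_fst_iff g_def strict_sorted_list_of_set)
  qed
  have gE: "{u, v} \<in> E \<longleftrightarrow> {g u, g v} \<in> two_section ?W ?F" if uv: "u \<in> V" "v \<in> V" for u v
  proof
    assume e: "{u, v} \<in> E"
    then have "{f u, f v} \<in> two_section V0 E0" using f uv unfolding graph_hom_def by blast
    then obtain e0 where e0: "f u \<noteq> f v" "e0 \<in> E0" "f u \<in> e0" "f v \<in> e0"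
      by (auto simp: two_section_iff)
    have disj: "P u \<inter> P v = {}" using K1 uv e by blast
    define Q where "Q c = (if c = f u then sorted_list_of_set (P u)
                           else if c = f v then sorted_list_of_set (P v) else [])" for c
    have "(\<lambda>c. (c, Q c)) ` e0 \<in> ?F"
    proof (rule ilth_edge_complete[OF e0(2)])
      show "\<forall>a\<in>e0. sorted_wrt (<) (Q a) \<and> (\<forall>i\<in>set (Q a). i < n)"
        using Plt Pfin by (auto simp: Q_def strict_sorted_list_of_set)
      show "\<forall>a\<in>e0. \<forall>b\<in>e0. a \<noteq> b \<longrightarrow> set (Q a) \<inter> set (Q b) = {}"
        using Pfin disj by (auto simp: Q_def)
    qed
    moreover have "g u \<in> (\<lambda>c. (c, Q c)) ` e0" "g v \<in> (\<lambda>c. (c, Q c)) ` e0"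
      using e0 by (auto simp: g_def Q_def image_iff)
    moreover have "g u \<noteq> g v" using e0(1) by (simp add: g_def)
    ultimately show "{g u, g v} \<in> two_section ?W ?F" by (auto simp: two_section_iff)
  next
    assume a: "{g u, g v} \<in> two_section ?W ?F"
    then have "g u \<noteq> g v" by (simp add: two_section_iff)
    then have "u \<noteq> v" by blast
    have "set (snd (g u)) \<inter> set (snd (g v)) = {}" using ilth_adj[OF a] by blast
    then have "P u \<inter> P v = {}" using setg by simp
    then show "{u, v} \<in> E" using K2 uv by blast
  qed
  have "iso_induced_subgraph V E ?W (two_section ?W ?F)"
    unfolding iso_induced_subgraph_def
    using gW ginj gE by (intro exI[of _ g] exI[of _ "g ` V"]) (auto simp: bij_betw_def)
  then show "\<exists>t. iso_induced_subgraph V E (fst (ilth V0 E0 t))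
                 (two_section (fst (ilth V0 E0 t)) (snd (ilth V0 E0 t)))" by blast
qed

end
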